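(* Let $G=(V,E)$ be a 3-vertex-connected graph with minimum degree $\delta$. Then Broadcast on $G$ is not solvable with $k\le \delta-2$ ignorant agents (the adversary has a winning strategy).
   Context: A graph is 3-vertex-connected if it has more than 3 vertices and remains connected after deleting any 2 vertices. Broadcast model: a connected base graph $G=(V,E)$ with $n$ nodes. There is one source agent holding a message $\mathcal M$ and $k\ge1$ ignorant agents (agents not holding $\mathcal M$); initially all agents occupy pairwise distinct nodes, the initial placement being chosen by the adversary. Time proceeds in synchronous rounds; in each round: (1) the adversary removes a (possibly empty) set $E'\subseteq E$ of edges such that $(V,E\setminus E')$ is connected; (2) each agent (agents have unique IDs, local memory, and see the entire current graph, the positions of all agents and which agents hold $\mathcal M$) chooses either to stay or to traverse an edge of $E\setminus E'$ incident to its current node; (3) agents move. Whenever an ignorant agent is at the same node as an agent holding $\mathcal M$, it receives $\mathcal M$ and becomes a source agent. The adversary is adaptive and knows the agents' strategy. Broadcast is solvable on $G$ with $k$ ignorant agents if the agents have a strategy such that, for every initial placement and every adversary behaviour, after finitely many rounds all agents hold $\mathcal M$; otherwise the adversary is said to have a winning strategy. *)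

theory Defs
  imports Main
begin

definition simple_graph :: "'v set \<Rightarrow> 'v set set \<Rightarrow> bool" where
  "simple_graph V E \<longleftrightarrow> (\<forall>e\<in>E. \<exists>u v. e = {u, v} \<and> u \<noteq> v \<and> u \<in> V \<and> v \<in> V)"

definition adj_rel :: "'v set set \<Rightarrow> ('v \<times> 'v) set" where
  "adj_rel E = {(u, v). {u, v} \<in> E}"

definition graph_connected :: "'v set \<Rightarrow> 'v set set \<Rightarrow> bool" where
  "graph_connected V E \<longleftrightarrow> (\<forall>u\<in>V. \<forall>v\<in>V. (u, v) \<in> (adj_rel E)\<^sup>*)"

definition delete_vertices :: "'v set \<Rightarrow> 'v set set \<Rightarrow> 'v set \<Rightarrow> 'v set set" where
  "delete_vertices V E S = {e \<in> E. e \<inter> S = {}}"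

definition three_vertex_connected :: "'v set \<Rightarrow> 'v set set \<Rightarrow> bool" where
  "three_vertex_connected V E \<longleftrightarrow> card V > 3 \<and>
     (\<forall>S. S \<subseteq> V \<and> card S = 2 \<longrightarrow> graph_connected (V - S) (delete_vertices V E S))"

definition degree :: "'v set set \<Rightarrow> 'v \<Rightarrow> nat" where
  "degree E v = card {u. {u, v} \<in> E}"

definition min_degree :: "'v set \<Rightarrow> 'v set set \<Rightarrow> nat" where
  "min_degree V E = Min (degree E ` V)"

(* Agents are 0..k; agent 0 is the source, agents 1..k are ignorant.
   A configuration: positions of agents and which agents hold the message.
   Observation history: for every round j = 0..t, the current graph edges (E - E'_j)
   and the configuration at the start of round j.
   A (deterministic, joint) agent strategy maps the observation history to the node
   each agent wants to go to; a request that is neither staying nor traversing a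
   present incident edge is treated as staying. *)
type_synonym 'v config = "(nat \<Rightarrow> 'v) \<times> (nat \<Rightarrow> bool)"
type_synonym 'v history = "('v set set \<times> 'v config) list"
type_synonym 'v strategy = "'v history \<Rightarrow> nat \<Rightarrow> 'v"

definition step_config :: "nat \<Rightarrow> 'v set set \<Rightarrow> 'v config \<Rightarrow> (nat \<Rightarrow> 'v) \<Rightarrow> 'v config" where
  "step_config k Gt c tgt =
     (let p = fst c; inf = snd c;
          p' = (\<lambda>a. if tgt a = p a \<or> {p a, tgt a} \<in> Gt then tgt a else p a);
          inf' = (\<lambda>a. inf a \<or> (\<exists>b\<le>k. inf b \<and> p' b = p' a))
      in (p', inf'))"

primrec run_hist :: "nat \<Rightarrow> 'v strategy \<Rightarrow> (nat \<Rightarrow> 'v set set) \<Rightarrow> 'v set set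
                     \<Rightarrow> (nat \<Rightarrow> 'v) \<Rightarrow> nat \<Rightarrow> 'v history" where
  "run_hist k \<sigma> R E p0 0 = [(E - R 0, (p0, \<lambda>a. a = 0))]"
| "run_hist k \<sigma> R E p0 (Suc t) =
     (let h = run_hist k \<sigma> R E p0 t
      in h @ [(E - R (Suc t), step_config k (fst (last h)) (snd (last h)) (\<sigma> h))])"

definition run_config :: "nat \<Rightarrow> 'v strategy \<Rightarrow> (nat \<Rightarrow> 'v set set) \<Rightarrow> 'v set set
                     \<Rightarrow> (nat \<Rightarrow> 'v) \<Rightarrow> nat \<Rightarrow> 'v config" where
  "run_config k \<sigma> R E p0 t = snd (last (run_hist k \<sigma> R E p0 t))"

definition valid_placement :: "'v set \<Rightarrow> nat \<Rightarrow> (nat \<Rightarrow> 'v) \<Rightarrow> bool" where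
  "valid_placement V k p0 \<longleftrightarrow> inj_on p0 {0..k} \<and> p0 ` {0..k} \<subseteq> V"

definition valid_adversary :: "'v set \<Rightarrow> 'v set set \<Rightarrow> (nat \<Rightarrow> 'v set set) \<Rightarrow> bool" where
  "valid_adversary V E R \<longleftrightarrow> (\<forall>t. R t \<subseteq> E \<and> graph_connected V (E - R t))"

definition broadcast_solvable :: "'v set \<Rightarrow> 'v set set \<Rightarrow> nat \<Rightarrow> bool" where
  "broadcast_solvable V E k \<longleftrightarrow>
     (\<exists>\<sigma>. \<forall>p0 R. valid_placement V k p0 \<longrightarrow> valid_adversary V E R \<longrightarrow>
        (\<exists>t. \<forall>a\<le>k. snd (run_config k \<sigma> R E p0 t) a))"

end

theory Submission
  imports Defs
begin

definition advA :: "nat \<Rightarrow> (nat \<Rightarrow> 'v) \<Rightarrow> 'v set" where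
  "advA k p = p ` {1..k} - {p 0}"

definition advW :: "'v set set \<Rightarrow> nat \<Rightarrow> (nat \<Rightarrow> 'v) \<Rightarrow> 'v" where
  "advW E k p = (SOME w. {p 0, w} \<in> E \<and> w \<notin> advA k p)"

definition adv :: "'v set \<Rightarrow> 'v set set \<Rightarrow> nat \<Rightarrow> (nat \<Rightarrow> 'v) \<Rightarrow> 'v set set" where
  "adv V E k p = (if p 0 \<in> V then {e\<in>E. (p 0 \<in> e \<and> e \<noteq> {p 0, advW E k p}) \<or>
        (advW E k p \<in> e \<and> e \<inter> advA k p \<noteq> {})} else {})"

lemma nbr_exists:
  assumes "finite V" "simple_graph V E" "v \<in> V" "finite B" "card B < min_degree V E"
  shows "\<exists>u. {v,u} \<in> E \<and> u \<notin> B"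
proof (rule ccontr)
  assume "\<not> ?thesis"
  hence sub: "{u. {u, v} \<in> E} \<subseteq> B" by (auto simp: insert_commute)
  have "min_degree V E \<le> degree E v"
    unfolding min_degree_def using assms(1,3) by (intro Min_le) auto
  also have "degree E v \<le> card B" unfolding degree_def
    using card_mono[OF assms(4) sub] .
  finally show False using assms(5) by simp
qed

lemma card_advA: "card (advA k p) \<le> k" "finite (advA k p)"
proof -
  have "card (advA k p) \<le> card (p ` {1..k})" unfolding advA_def by (intro card_mono) auto
  also have "\<dots> \<le> card {1..k}" by (rule card_image_le) simp
  finally show "card (advA k p) \<le> k" by simp
  show "finite (advA k p)" unfolding advA_def by simp
qed

lemma advW_prop:
  assumes "finite V" "simple_graph V E" "p 0 \<in> V" "k + 2 \<le> min_degree V E"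
  shows "{p 0, advW E k p} \<in> E \<and> advW E k p \<notin> advA k p"
proof -
  have "\<exists>w. {p 0, w} \<in> E \<and> w \<notin> advA k p"
    using nbr_exists[OF assms(1-3) card_advA(2)] card_advA(1)[of k p] assms(4) by force
  thus ?thesis unfolding advW_def by (rule someI_ex)
qed

lemma edge_in_V: "simple_graph V E \<Longrightarrow> {a,b} \<in> E \<Longrightarrow> a \<in> V \<and> b \<in> V \<and> a \<noteq> b"
  unfolding simple_graph_def by (auto simp: doubleton_eq_iff)

lemma adj_sym: "(a,b) \<in> (adj_rel E)\<^sup>* \<Longrightarrow> (b,a) \<in> (adj_rel E)\<^sup>*"
proof -
  have "sym (adj_rel E)" unfolding adj_rel_def sym_def by (auto simp: insert_commute)
  hence "sym ((adj_rel E)\<^sup>*)" by (rule sym_rtrancl)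
  thus "(a,b) \<in> (adj_rel E)\<^sup>* \<Longrightarrow> (b,a) \<in> (adj_rel E)\<^sup>*" by (auto dest: symD)
qed

lemma adj_mono: "E1 \<subseteq> E2 \<Longrightarrow> (a,b) \<in> (adj_rel E1)\<^sup>* \<Longrightarrow> (a,b) \<in> (adj_rel E2)\<^sup>*"
proof -
  assume "E1 \<subseteq> E2"
  hence "adj_rel E1 \<subseteq> adj_rel E2" unfolding adj_rel_def by auto
  thus "(a,b) \<in> (adj_rel E1)\<^sup>* \<Longrightarrow> (a,b) \<in> (adj_rel E2)\<^sup>*" using rtrancl_mono by blast
qed

lemma adv_connected:
  assumes "finite V" "simple_graph V E" "graph_connected V E" "three_vertex_connected V E"
    "k + 2 \<le> min_degree V E"
  shows "graph_connected V (E - adv V E k p)"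
proof (cases "p 0 \<in> V")
  case False thus ?thesis using assms(3) by (simp add: adv_def)
next
  case True
  define s where "s = p 0"
  define w where "w = advW E k p"
  define A where "A = advA k p"
  have sw: "{s,w} \<in> E" "w \<notin> A" using advW_prop[of V E p k, OF assms(1,2) True assms(5)]
    unfolding s_def w_def A_def by auto
  have sV: "s \<in> V" "w \<in> V" "s \<noteq> w" using edge_in_V[OF assms(2) sw(1)] by auto
  have sA: "s \<notin> A" unfolding A_def s_def advA_def by auto
  have R: "adv V E k p = {e\<in>E. (s \<in> e \<and> e \<noteq> {s, w}) \<or> (w \<in> e \<and> e \<inter> A \<noteq> {})}"
    unfolding adv_def s_def w_def A_def using True by simp
  let ?G = "E - adv V E k p"
  have fin: "finite (insert s A)" using card_advA(2)[of k p] unfolding A_def by simp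
  have "card (insert s A) \<le> k + 1" using card_insert_le_m1[of k A s] card_advA(1)[of k p]
    unfolding A_def
    by (metis card_advA(2) card_insert_if le_SucI add.commute plus_1_eq_Suc Suc_le_mono)
  hence "card (insert s A) < min_degree V E" using assms(5) by simp
  then obtain u where u: "{w,u} \<in> E" "u \<notin> insert s A"
    using nbr_exists[OF assms(1,2) sV(2) fin] by blast
  have uV: "u \<in> V" "u \<noteq> w" using edge_in_V[OF assms(2) u(1)] by auto
  have e1: "{s,w} \<in> ?G" using sw sA sV(3) R by auto
  have e2: "{w,u} \<in> ?G" using u sw(2) sV(3) uV R by auto
  have ws: "(w,s) \<in> (adj_rel ?G)\<^sup>*" using e1 unfolding adj_rel_def
    by (auto simp: insert_commute)
  have uw: "(u,w) \<in> (adj_rel ?G)\<^sup>*" using e2 unfolding adj_rel_def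
    by (auto simp: insert_commute)
  have S: "{s,w} \<subseteq> V" "card {s,w} = 2" using sV by auto
  have conn: "graph_connected (V - {s,w}) (delete_vertices V E {s,w})"
    using assms(4) S unfolding three_vertex_connected_def by blast
  have dsub: "delete_vertices V E {s,w} \<subseteq> ?G" unfolding delete_vertices_def R by auto
  have toS: "(v,s) \<in> (adj_rel ?G)\<^sup>*" if vV: "v \<in> V" for v
  proof -
    consider "v = s" | "v = w" | "v \<in> V - {s,w}" using vV by auto
    thus ?thesis
    proof cases
      case 3
      have "u \<in> V - {s,w}" using uV u(2) by auto
      hence "(v,u) \<in> (adj_rel (delete_vertices V E {s,w}))\<^sup>*"
        using conn 3 unfolding graph_connected_def by blast
      hence "(v,u) \<in> (adj_rel ?G)\<^sup>*" using adj_mono[OF dsub] by blast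
      thus ?thesis using uw ws by (meson rtrancl_trans)
    qed (use ws in auto)
  qed
  show ?thesis unfolding graph_connected_def
    using toS adj_sym by (meson rtrancl_trans)
qed

definition inv :: "'v set \<Rightarrow> nat \<Rightarrow> 'v config \<Rightarrow> bool" where
  "inv V k c \<longleftrightarrow> fst c 0 \<in> V \<and> (\<forall>a\<in>{1..k}. fst c a \<noteq> fst c 0) \<and> (\<forall>a\<le>k. snd c a \<longleftrightarrow> a = 0)"

lemma inv_step:
  assumes "finite V" "simple_graph V E" "k + 2 \<le> min_degree V E" "inv V k c"
  shows "inv V k (step_config k (E - adv V E k (fst c)) c tgt)"
proof -
  obtain p inf where c: "c = (p, inf)" by (cases c)
  have p0: "p 0 \<in> V" and dist: "\<forall>a\<in>{1..k}. p a \<noteq> p 0" and inf: "\<forall>a\<le>k. inf a \<longleftrightarrow> a = 0"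
    using assms(4) unfolding inv_def c by auto
  define s where "s = p 0"
  define w where "w = advW E k p"
  define A where "A = advA k p"
  have sw: "{s,w} \<in> E" "w \<notin> A" using advW_prop[of V E p k, OF assms(1,2) p0 assms(3)]
    unfolding s_def w_def A_def by auto
  have sV: "s \<in> V" "w \<in> V" "s \<noteq> w" using edge_in_V[OF assms(2) sw(1)] by auto
  have R: "adv V E k p = {e\<in>E. (s \<in> e \<and> e \<noteq> {s, w}) \<or> (w \<in> e \<and> e \<inter> A \<noteq> {})}"
    unfolding adv_def s_def w_def A_def using p0 by simp
  let ?G = "E - adv V E k p"
  define p' where "p' = (\<lambda>a. if tgt a = p a \<or> {p a, tgt a} \<in> ?G then tgt a else p a)"
  have p'0: "p' 0 = s \<or> p' 0 = w"
  proof -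
    have "x = w" if "{s, x} \<in> ?G" "x \<noteq> s" for x
    proof (rule ccontr)
      assume "x \<noteq> w"
      hence "{s,x} \<noteq> {s,w}" using that(2) by (auto simp: doubleton_eq_iff)
      thus False using that(1) R by auto
    qed
    thus ?thesis unfolding p'_def s_def by auto
  qed
  have p'a: "p' a \<noteq> s \<and> p' a \<noteq> w" if "a \<in> {1..k}" for a
  proof -
    have yA: "p a \<in> A" using that dist unfolding A_def advA_def by auto
    have ys: "p a \<noteq> s" using that dist s_def by auto
    have yw: "p a \<noteq> w" using yA sw(2) by auto
    have n1: "{p a, s} \<notin> ?G"
    proof
      assume h: "{p a, s} \<in> ?G"
      have "{p a, s} \<noteq> {s,w}" using ys yw by (auto simp: doubleton_eq_iff)
      thus False using h R by auto
    qed
    have n2: "{p a, w} \<notin> ?G" using R yA by auto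
    show ?thesis unfolding p'_def using n1 n2 ys yw by auto
  qed
  have step: "step_config k ?G (p, inf) tgt =
      (p', \<lambda>a. inf a \<or> (\<exists>b\<le>k. inf b \<and> p' b = p' a))"
    unfolding step_config_def p'_def by simp
  show ?thesis unfolding c fst_conv step inv_def snd_conv
  proof (intro conjI ballI allI impI)
    show "p' 0 \<in> V" using p'0 sV by auto
    fix a assume "a \<in> {1..k}" thus "p' a \<noteq> p' 0" using p'a p'0 by metis
  next
    fix a assume a: "a \<le> k"
    show "(inf a \<or> (\<exists>b\<le>k. inf b \<and> p' b = p' a)) = (a = 0)"
    proof
      assume "inf a \<or> (\<exists>b\<le>k. inf b \<and> p' b = p' a)"
      thus "a = 0"
      proof
        assume "inf a" thus ?thesis using inf a by auto
      next
        assume "\<exists>b\<le>k. inf b \<and> p' b = p' a"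
        then obtain b where "b \<le> k" "inf b" "p' b = p' a" by blast
        hence "b = 0" using inf by auto
        show "a = 0"
        proof (rule ccontr)
          assume "a \<noteq> 0" hence "a \<in> {1..k}" using a by auto
          thus False using p'a p'0 \<open>b = 0\<close> \<open>p' b = p' a\<close> by metis
        qed
      qed
    next
      assume "a = 0" thus "inf a \<or> (\<exists>b\<le>k. inf b \<and> p' b = p' a)" using inf by auto
    qed
  qed
qed

primrec Hh :: "'v set \<Rightarrow> 'v set set \<Rightarrow> nat \<Rightarrow> 'v strategy \<Rightarrow> (nat \<Rightarrow> 'v) \<Rightarrow> nat \<Rightarrow> 'v history" where
  "Hh V E k \<sigma> p0 0 = [(E - adv V E k p0, (p0, \<lambda>a. a = 0))]"
| "Hh V E k \<sigma> p0 (Suc t) = (let h = Hh V E k \<sigma> p0 t;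
     c' = step_config k (fst (last h)) (snd (last h)) (\<sigma> h) in h @ [(E - adv V E k (fst c'), c')])"

lemma Hh_run:
  "run_hist k \<sigma> (\<lambda>t. adv V E k (fst (snd (last (Hh V E k \<sigma> p0 t))))) E p0 t = Hh V E k \<sigma> p0 t"
  by (induction t) (simp_all add: Let_def)

lemma Hh_inv:
  assumes "finite V" "simple_graph V E" "k + 2 \<le> min_degree V E" "p0 0 \<in> V"
    "\<forall>a\<in>{1..k}. p0 a \<noteq> p0 0"
  shows "fst (last (Hh V E k \<sigma> p0 t)) = E - adv V E k (fst (snd (last (Hh V E k \<sigma> p0 t))))
     \<and> inv V k (snd (last (Hh V E k \<sigma> p0 t)))"
proof (induction t)
  case 0 thus ?case using assms(4,5) by (simp add: inv_def)
next
  case (Suc t)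
  show ?case using Suc inv_step[OF assms(1-3)] by (simp add: Let_def)
qed

theorem theorem6:
  fixes V :: "'v set" and E :: "'v set set" and k :: nat
  assumes "finite V"
    and "simple_graph V E"
    and "graph_connected V E"
    and "three_vertex_connected V E"
    and "1 \<le> k"
    and "k + 2 \<le> min_degree V E"
  shows "\<not> broadcast_solvable V E k"
proof
  assume "broadcast_solvable V E k"
  then obtain \<sigma> where sig: "\<forall>p0 R. valid_placement V k p0 \<longrightarrow> valid_adversary V E R \<longrightarrow>
        (\<exists>t. \<forall>a\<le>k. snd (run_config k \<sigma> R E p0 t) a)"
    unfolding broadcast_solvable_def by blast
  have "card {0..k} \<le> card V"
  proof -
    have "card V > 3" using assms(4) unfolding three_vertex_connected_def by simp
    obtain v where v: "v \<in> V" using \<open>card V > 3\<close> by fastforce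
    have "card {0..k} = k + 1" by simp
    also have "k + 1 < min_degree V E" using assms(6) by simp
    also have "min_degree V E \<le> degree E v"
      unfolding min_degree_def using assms(1) v by (intro Min_le) auto
    also have "degree E v \<le> card V" unfolding degree_def
      using assms(1) edge_in_V[OF assms(2)] by (intro card_mono) (auto simp: insert_commute)
    finally show ?thesis by simp
  qed
  then obtain f where f: "inj_on f {0..k}" "f ` {0..k} \<subseteq> V"
    using card_le_inj[of "{0..k}" V] assms(1) by auto
  have vp: "valid_placement V k f" unfolding valid_placement_def using f by simp
  define R where "R = (\<lambda>t. adv V E k (fst (snd (last (Hh V E k \<sigma> f t)))))"
  have va: "valid_adversary V E R" unfolding valid_adversary_def R_def
    using adv_connected[OF assms(1-4,6)] by (auto simp: adv_def)
  obtain t where t: "\<forall>a\<le>k. snd (run_config k \<sigma> R E f t) a" using sig vp va by blast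
  have f0: "f 0 \<in> V" using f by auto
  have fd: "\<forall>a\<in>{1..k}. f a \<noteq> f 0" using f(1) unfolding inj_on_def by fastforce
  have "inv V k (snd (last (Hh V E k \<sigma> f t)))"
    using Hh_inv[OF assms(1,2,6) f0 fd] by blast
  moreover have "run_config k \<sigma> R E f t = snd (last (Hh V E k \<sigma> f t))"
    unfolding run_config_def R_def Hh_run ..
  ultimately show False using t assms(5) unfolding inv_def by auto
qed

end
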